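(* Let $\mathcal{P}\subset\mathbb{R}^d$ be a finite set of $n$ item vectors, $\bm{q}\in\mathbb{R}^d$ a query vector, $k>1$ an integer with $k\le n$, $\lambda\in[0,1]$ and $\mu>0$, and assume $\langle \bm{x},\bm{y}\rangle\ge 0$ for all $\bm{x},\bm{y}\in\mathcal{P}\cup\{\bm{q}\}$. Let $f$ denote either $f_{avg}$ or $f_{max}$ (defined in the context), and let $\mathcal{S}^*\in\arg\max_{\mathcal{T}\subseteq\mathcal{P},|\mathcal{T}|=k} f(\mathcal{T})$. Let $\mathcal{S}$ be the output of the Greedy algorithm run with this $f$, and let $\mathcal{S}'$ be a $k$MIPS result for $\bm{q}$, i.e., a set of $k$ vectors of $\mathcal{P}$ such that $\langle \bm{p},\bm{q}\rangle\ge\langle \bm{p}',\bm{q}\rangle$ for all $\bm{p}\in\mathcal{S}'$, $\bm{p}'\in\mathcal{P}\setminus\mathcal{S}'$. Define $\overline{f}(\mathcal{T}) := \frac{\lambda}{k}\sum_{\bm{p}\in\mathcal{T}}\langle \bm{p},\bm{q}\rangle$, and let $div^* = \max_{\mathcal{T}\subseteq\mathcal{P},|\mathcal{T}|=k}\frac{2\mu(1-\lambda)}{k(k-1)}\sum_{\{\bm{p}_x,\bm{p}_y\}\subseteq\mathcal{T},\,\bm{p}_x\ne\bm{p}_y}\langle\bm{p}_x,\bm{p}_y\rangle$ if $f=f_{avg}$, and $div^*=\max_{\bm{p}_x\neq\bm{p}_y\in\mathcal{P}}\mu(1-\lambda)\langle\bm{p}_x,\bm{p}_y\rangle$ if $f=f_{max}$.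 Suppose $f(\mathcal{S}')>0$. Then $$f(\mathcal{S})\ \ge\ \max\!\Big(\tfrac{f(\mathcal{S}')}{\overline{f}(\mathcal{S}')}\cdot f(\mathcal{S}^* ),\ f(\mathcal{S}^* )-div^*\Big)-\Delta',\qquad\text{where } \Delta'=\max\big(0,\ f(\mathcal{S}')-f(\mathcal{S})\big).$$
   Context: For $\mathcal{S}\subseteq\mathcal{P}$ define $f_{avg}(\mathcal{S}) = \frac{\lambda}{k}\sum_{\bm{p}\in\mathcal{S}}\langle\bm{p},\bm{q}\rangle - \frac{2\mu(1-\lambda)}{k(k-1)}\sum_{\{\bm{p},\bm{p}'\}\subseteq\mathcal{S},\,\bm{p}\neq\bm{p}'}\langle\bm{p},\bm{p}'\rangle$ (sum over unordered pairs of distinct elements), and $f_{max}(\mathcal{S}) = \frac{\lambda}{k}\sum_{\bm{p}\in\mathcal{S}}\langle\bm{p},\bm{q}\rangle - \mu(1-\lambda)\max_{\bm{p}\neq\bm{p}'\in\mathcal{S}}\langle\bm{p},\bm{p}'\rangle$, where a maximum over an empty collection of pairs is taken to be $0$. Marginal gains: $\Delta_{f_{avg}}(\bm{p},\mathcal{S}) = \frac{\lambda}{k}\langle\bm{p},\bm{q}\rangle - \frac{2\mu(1-\lambda)}{k(k-1)}\sum_{\bm{p}'\in\mathcal{S}}\langle\bm{p},\bm{p}'\rangle$ and $\Delta_{f_{max}}(\bm{p},\mathcal{S}) = \frac{\lambda}{k}\langle\bm{p},\bm{q}\rangle - \mu(1-\lambda)\big(\max_{\bm{p}_x\ne\bm{p}_y\in\mathcal{S}\cup\{\bm{p}\}}\langle\bm{p}_x,\bm{p}_y\rangle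 - \max_{\bm{p}_x\ne\bm{p}_y\in\mathcal{S}}\langle\bm{p}_x,\bm{p}_y\rangle\big)$ (same empty-max convention). Greedy algorithm: set $\mathcal{S}=\{\bm{p}^*\}$ with $\bm{p}^*\in\arg\max_{\bm{p}\in\mathcal{P}}\langle\bm{p},\bm{q}\rangle$; then for $i=2,\dots,k$, choose $\bm{p}^*\in\arg\max_{\bm{p}\in\mathcal{P}\setminus\mathcal{S}}\Delta_f(\bm{p},\mathcal{S})$ and set $\mathcal{S}\leftarrow\mathcal{S}\cup\{\bm{p}^*\}$ (ties broken arbitrarily); output $\mathcal{S}$. *)

theory Defs
  imports "HOL-Analysis.Analysis"
begin

datatype objective = Avg | MaxDiv

text \<open>Sum of inner products over unordered pairs of distinct elements of S
  (each unordered pair counted once: the ordered double sum halved).\<close>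
definition pairsum :: "'a::real_inner set \<Rightarrow> real" where
  "pairsum S = (\<Sum>x\<in>S. \<Sum>y\<in>S - {x}. inner x y) / 2"

definition maxpair :: "'a::real_inner set \<Rightarrow> real" where
  "maxpair S = (if {inner x y | x y. x \<in> S \<and> y \<in> S \<and> x \<noteq> y} = {} then 0
                else Max {inner x y | x y. x \<in> S \<and> y \<in> S \<and> x \<noteq> y})"

definition relv :: "nat \<Rightarrow> real \<Rightarrow> 'a::real_inner \<Rightarrow> 'a set \<Rightarrow> real" where
  "relv k lam q S = lam / real k * (\<Sum>p\<in>S. inner p q)"

definition f_avg :: "nat \<Rightarrow> real \<Rightarrow> real \<Rightarrow> 'a::real_inner \<Rightarrow> 'a set \<Rightarrow> real" where
  "f_avg k lam mu q S = lam / real k * (\<Sum>p\<in>S. inner p q)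
     - 2 * mu * (1 - lam) / (real k * (real k - 1)) * pairsum S"

definition f_max :: "nat \<Rightarrow> real \<Rightarrow> real \<Rightarrow> 'a::real_inner \<Rightarrow> 'a set \<Rightarrow> real" where
  "f_max k lam mu q S = lam / real k * (\<Sum>p\<in>S. inner p q) - mu * (1 - lam) * maxpair S"

definition gain_avg :: "nat \<Rightarrow> real \<Rightarrow> real \<Rightarrow> 'a::real_inner \<Rightarrow> 'a \<Rightarrow> 'a set \<Rightarrow> real" where
  "gain_avg k lam mu q p S = lam / real k * inner p q
     - 2 * mu * (1 - lam) / (real k * (real k - 1)) * (\<Sum>p'\<in>S. inner p p')"

definition gain_max :: "nat \<Rightarrow> real \<Rightarrow> real \<Rightarrow> 'a::real_inner \<Rightarrow> 'a \<Rightarrow> 'a set \<Rightarrow> real" where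
  "gain_max k lam mu q p S = lam / real k * inner p q
     - mu * (1 - lam) * (maxpair (insert p S) - maxpair S)"

fun fobj :: "objective \<Rightarrow> nat \<Rightarrow> real \<Rightarrow> real \<Rightarrow> 'a::real_inner \<Rightarrow> 'a set \<Rightarrow> real" where
  "fobj Avg = f_avg"
| "fobj MaxDiv = f_max"

fun gain :: "objective \<Rightarrow> nat \<Rightarrow> real \<Rightarrow> real \<Rightarrow> 'a::real_inner \<Rightarrow> 'a \<Rightarrow> 'a set \<Rightarrow> real" where
  "gain Avg = gain_avg"
| "gain MaxDiv = gain_max"

fun divstar :: "objective \<Rightarrow> nat \<Rightarrow> real \<Rightarrow> real \<Rightarrow> 'a::real_inner set \<Rightarrow> real" where
  "divstar Avg k lam mu P =
     Max {2 * mu * (1 - lam) / (real k * (real k - 1)) * pairsum T | T. T \<subseteq> P \<and> card T = k}"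
| "divstar MaxDiv k lam mu P =
     Max {mu * (1 - lam) * inner x y | x y. x \<in> P \<and> y \<in> P \<and> x \<noteq> y}"

text \<open>A possible execution of the Greedy algorithm (ties broken arbitrarily), recorded
  as the list of items in the order they are picked.\<close>
definition greedy_trace ::
  "objective \<Rightarrow> nat \<Rightarrow> real \<Rightarrow> real \<Rightarrow> 'a::real_inner \<Rightarrow> 'a set \<Rightarrow> 'a list \<Rightarrow> bool" where
  "greedy_trace obj k lam mu q P xs \<longleftrightarrow>
     length xs = k \<and>
     (\<forall>i<k. xs ! i \<in> P - set (take i xs)) \<and>
     (0 < k \<longrightarrow> (\<forall>p\<in>P. inner p q \<le> inner (xs ! 0) q)) \<and>
     (\<forall>i. 1 \<le> i \<and> i < k \<longrightarrow>
        (\<forall>p\<in>P - set (take i xs).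
           gain obj k lam mu q p (set (take i xs)) \<le> gain obj k lam mu q (xs ! i) (set (take i xs))))"

end

theory Submission
  imports Defs
begin

lemma exch:
  fixes g :: "'a \<Rightarrow> real"
  assumes fin: "finite P" and T: "T \<subseteq> P" "card T = k" and S: "S \<subseteq> P" "card S = k"
    and dom: "\<forall>p\<in>S. \<forall>p'\<in>P - S. g p' \<le> g p"
  shows "sum g T \<le> sum g S"
proof -
  have fT: "finite T" using fin T finite_subset by blast
  have fS: "finite S" using fin S finite_subset by blast
  define A where "A = T - S"
  define B where "B = S - T"
  have fA: "finite A" "finite B" using fT fS A_def B_def by auto
  have cT: "card T = card (T \<inter> S) + card A"
    unfolding A_def using fT by (metis card_Int_Diff)
  have cS: "card S = card (S \<inter> T) + card B"
    unfolding B_def using fS by (metis card_Int_Diff)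
  have cAB: "card A = card B" using cT cS T S by (simp add: Int_commute)
  have pw: "\<forall>a\<in>A. \<forall>b\<in>B. g a \<le> g b" using dom T unfolding A_def B_def by auto
  have sAB: "sum g A \<le> sum g B"
  proof (cases "B = {}")
    case True
    then have "A = {}" using cAB fA by simp
    then show ?thesis using True by simp
  next
    case False
    define m where "m = Min (g ` B)"
    have m1: "\<forall>a\<in>A. g a \<le> m" unfolding m_def using pw False fA by auto
    have m2: "\<forall>b\<in>B. m \<le> g b" unfolding m_def using fA by auto
    have "sum g A \<le> sum (\<lambda>_. m) A" using m1 by (intro sum_mono) auto
    also have "\<dots> = real (card B) * m" using cAB by simp
    also have "\<dots> = sum (\<lambda>_. m) B" by simp
    also have "\<dots> \<le> sum g B" using m2 by (intro sum_mono) auto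
    finally show ?thesis .
  qed
  have e1: "sum g T = sum g (T \<inter> S) + sum g A"
    unfolding A_def using fT by (metis sum.Int_Diff)
  have e2: "sum g S = sum g (T \<inter> S) + sum g B"
    unfolding B_def using fS by (metis sum.Int_Diff Int_commute)
  show ?thesis using e1 e2 sAB by simp
qed

lemma pairsum_nonneg:
  assumes "\<forall>x\<in>T. \<forall>y\<in>T. inner x y \<ge> (0::real)"
  shows "pairsum T \<ge> 0"
  unfolding pairsum_def using assms
  by (intro divide_nonneg_pos sum_nonneg) auto

lemma maxpair_nonneg:
  assumes "finite T" "\<forall>x\<in>T. \<forall>y\<in>T. inner x y \<ge> (0::real)"
  shows "maxpair T \<ge> 0"
proof -
  let ?M = "{inner x y | x y. x \<in> T \<and> y \<in> T \<and> x \<noteq> y}"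
  have fin: "finite ?M"
  proof -
    have "?M \<subseteq> (\<lambda>(x,y). inner x y) ` (T \<times> T)" by auto
    then show ?thesis using assms(1) finite_subset by blast
  qed
  show ?thesis
  proof (cases "?M = {}")
    case True then show ?thesis unfolding maxpair_def by simp
  next
    case False
    then obtain v where v: "v \<in> ?M" by blast
    then have "v \<ge> 0" using assms(2) by auto
    moreover have "v \<le> Max ?M" using fin v by simp
    ultimately show ?thesis unfolding maxpair_def using False by simp
  qed
qed

lemma f_le_relv:
  assumes "finite T" "\<forall>x\<in>T. \<forall>y\<in>T. inner x y \<ge> (0::real)" "k > (1::nat)" "lam \<le> 1" "mu > 0"
  shows "fobj obj k lam mu q T \<le> relv k lam q T"
proof (cases obj)
  case Avg
  have "real k * (real k - 1) > 0" using assms(3) by simp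
  then have c: "2 * mu * (1 - lam) / (real k * (real k - 1)) \<ge> 0" using assms by simp
  have "pairsum T \<ge> 0" using pairsum_nonneg assms(2) by blast
  then have "2 * mu * (1 - lam) / (real k * (real k - 1)) * pairsum T \<ge> 0" using c by (rule mult_nonneg_nonneg[rotated])
  then show ?thesis using Avg by (simp add: f_avg_def relv_def)
next
  case MaxDiv
  have c: "mu * (1 - lam) \<ge> 0" using assms by simp
  have "maxpair T \<ge> 0" using maxpair_nonneg assms(1,2) by blast
  then show ?thesis using MaxDiv c by (simp add: f_max_def relv_def)
qed

lemma div_bound:
  assumes fin: "finite P" and S: "S \<subseteq> P" "card S = k" and k: "k > (1::nat)"
    and lam: "lam \<le> 1" and mu: "mu > 0"
  shows "relv k lam q S - divstar obj k lam mu P \<le> fobj obj k lam mu q S"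
proof (cases obj)
  case Avg
  let ?M = "{2 * mu * (1 - lam) / (real k * (real k - 1)) * pairsum T | T. T \<subseteq> P \<and> card T = k}"
  have "?M \<subseteq> (\<lambda>T. 2 * mu * (1 - lam) / (real k * (real k - 1)) * pairsum T) ` Pow P" by auto
  then have "finite ?M" using fin finite_subset by blast
  moreover have "2 * mu * (1 - lam) / (real k * (real k - 1)) * pairsum S \<in> ?M" using S by blast
  ultimately have "2 * mu * (1 - lam) / (real k * (real k - 1)) * pairsum S \<le> Max ?M" by simp
  then show ?thesis using Avg by (simp add: f_avg_def relv_def)
next
  case MaxDiv
  let ?N = "{inner x y | x y. x \<in> S \<and> y \<in> S \<and> x \<noteq> y}"
  let ?M = "{mu * (1 - lam) * inner x y | x y. x \<in> P \<and> y \<in> P \<and> x \<noteq> y}"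
  have fS: "finite S" using fin S finite_subset by blast
  have "?N \<subseteq> (\<lambda>(x,y). inner x y) ` (S \<times> S)" by auto
  then have finN: "finite ?N" using fS finite_subset by blast
  have "?M \<subseteq> (\<lambda>(x,y). mu * (1 - lam) * inner x y) ` (P \<times> P)" by auto
  then have finM: "finite ?M" using fin finite_subset by blast
  have "card S \<ge> 2" using S k by simp
  then obtain a b where ab: "a \<in> S" "b \<in> S" "a \<noteq> b"
    by (metis One_nat_def card_le_Suc0_iff_eq not_less_eq_eq numeral_2_eq_2 fS)
  then have ne: "?N \<noteq> {}" by blast
  have "Max ?N \<in> ?N" using finN ne by (rule Max_in)
  then obtain x y where xy: "x \<in> S" "y \<in> S" "x \<noteq> y" "Max ?N = inner x y" by auto
  then have "mu * (1 - lam) * inner x y \<in> ?M" using S by blast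
  then have "mu * (1 - lam) * inner x y \<le> Max ?M" using finM by simp
  moreover have "maxpair S = inner x y" using xy ne unfolding maxpair_def by presburger
  ultimately have "mu * (1 - lam) * maxpair S \<le> Max ?M" by simp
  then show ?thesis using MaxDiv by (simp add: f_max_def relv_def)
qed

theorem theorem1:
  fixes P :: "'a::euclidean_space set" and q :: 'a and k :: nat and lam mu :: real
    and obj :: objective and Sstar S' :: "'a set" and xs :: "'a list"
  assumes finP: "finite P"
    and k_gt1: "k > 1" and k_le: "k \<le> card P"
    and lam: "0 \<le> lam" "lam \<le> 1" and mu: "mu > 0"
    and nonneg: "\<forall>x\<in>insert q P. \<forall>y\<in>insert q P. inner x y \<ge> 0"
    and opt: "Sstar \<subseteq> P" "card Sstar = k"
       "\<forall>T. T \<subseteq> P \<and> card T = k \<longrightarrow> fobj obj k lam mu q T \<le> fobj obj k lam mu q Sstar"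
    and greedy: "greedy_trace obj k lam mu q P xs"
    and kmips: "S' \<subseteq> P" "card S' = k" "\<forall>p\<in>S'. \<forall>p'\<in>P - S'. inner p' q \<le> inner p q"
    and pos: "fobj obj k lam mu q S' > 0"
  shows "fobj obj k lam mu q (set xs) \<ge>
     max (fobj obj k lam mu q S' / relv k lam q S' * fobj obj k lam mu q Sstar)
         (fobj obj k lam mu q Sstar - divstar obj k lam mu P)
     - max 0 (fobj obj k lam mu q S' - fobj obj k lam mu q (set xs))"
proof -
  let ?f = "fobj obj k lam mu q"
  let ?r = "relv k lam q"
  have nnP: "\<forall>x\<in>P. \<forall>y\<in>P. inner x y \<ge> (0::real)" using nonneg by auto
  have fSs: "finite Sstar" "finite S'" using finP opt kmips finite_subset by blast+
  have h1: "?f Sstar \<le> ?r Sstar"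
    using f_le_relv[OF fSs(1) _ k_gt1 lam(2) mu] nnP opt(1) by blast
  have h2: "?f S' \<le> ?r S'"
    using f_le_relv[OF fSs(2) _ k_gt1 lam(2) mu] nnP kmips(1) by blast
  have h3: "?r Sstar \<le> ?r S'"
  proof -
    have "(\<Sum>p\<in>Sstar. inner p q) \<le> (\<Sum>p\<in>S'. inner p q)"
      using exch[OF finP opt(1,2) kmips(1,2), of "\<lambda>p. inner p q"] kmips(3) by blast
    moreover have "lam / real k \<ge> 0" using lam by simp
    ultimately show ?thesis unfolding relv_def by (rule mult_left_mono)
  qed
  have rpos: "?r S' > 0" using h2 pos by linarith
  have A: "?f S' / ?r S' * ?f Sstar \<le> ?f S'"
  proof -
    have "?f S' / ?r S' \<ge> 0" using pos rpos by simp
    moreover have "?f Sstar \<le> ?r S'" using h1 h3 by linarith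
    ultimately have "?f S' / ?r S' * ?f Sstar \<le> ?f S' / ?r S' * ?r S'"
      by (intro mult_left_mono)
    also have "\<dots> = ?f S'" using rpos by simp
    finally show ?thesis .
  qed
  have B: "?f Sstar - divstar obj k lam mu P \<le> ?f S'"
    using div_bound[OF finP kmips(1,2) k_gt1 lam(2) mu, of q obj] h1 h3 by linarith
  show ?thesis using A B by linarith
qed

end
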